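(* Let $H$ be a Hopf algebra, $E$ an $H$-comodule algebra, and $X\in (E\otimes H)^\times$. Define $\Delta_E^X:E\to E\otimes H$ by $\Delta_E^X(x)=X\Delta_E(x)$. Then (1) $X\in\mathcal{Z}^1(H,E)$ if and only if $(E,\Delta^X_E)$ (with $E$ acting on itself by right multiplication) is an $(H,E)$-Hopf module; (2) two Hopf $1$-cocycles $X,X'$ are cohomologous if and only if the $(H,E)$-Hopf modules $(E,\Delta_E^X)$ and $(E,\Delta_E^{X'})$ are isomorphic.
   Context: $k$ commutative ring, $\otimes=\otimes_k$. An $H$-comodule algebra is an algebra $E$ with coaction $\Delta_E:E\to E\otimes H$ that is an algebra morphism. An $(H,E)$-Hopf module is a right $E$-module $M$ with a right $H$-comodule structure $\Delta_M$ (coassociative, counital) such that $\Delta_M(ms)=\Delta_M(m)\Delta_E(s)$; a morphism is an $E$-linear $H$-colinear map. $d^0(x)=\Delta_E(x)$, $d^1(x)=x\otimes1$ for $x\in E$; $d^0(X)=(\Delta_E\otimes\mathrm{id}_H)(X)$, $d^1(X)=(\mathrm{id}_E\otimes\Delta_H)(X)$, $d^2(X)=X\otimes1$ for $X\in E\otimes H$. $\mathcal{Z}^1(H,E)=\{X\in(E\otimes H)^\times: d^2(X)d^0(X)=d^1(X)\}$; $X,X'$ are cohomologous if $X'=d^1(x^{-1})Xd^0(x)$ for some $x\in E^\times$. *)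

theory Defs
  imports Complex_Main "HOL-Library.Function_Algebras"
begin

text \<open>The ground ring k is a type 'k of class comm_ring_1; k-modules are types of class
ab_group_add equipped with a scalar multiplication satisfying the locale module from
HOL.Modules; k-linear maps are given by the locale module_hom.\<close>

definition tbilinear ::
  "('k::comm_ring_1 \<Rightarrow> 'a::ab_group_add \<Rightarrow> 'a) \<Rightarrow> ('k \<Rightarrow> 'b::ab_group_add \<Rightarrow> 'b) \<Rightarrow>
   ('k \<Rightarrow> 'c::ab_group_add \<Rightarrow> 'c) \<Rightarrow> ('a \<Rightarrow> 'b \<Rightarrow> 'c) \<Rightarrow> bool" where
  "tbilinear sA sB sC f \<longleftrightarrow>
     (\<forall>a. module_hom sB sC (f a)) \<and> (\<forall>b. module_hom sA sC (\<lambda>a. f a b))"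

definition fdelta :: "'p \<Rightarrow> 'p \<Rightarrow> 'k::comm_ring_1" where
  "fdelta p = (\<lambda>q. if q = p then 1 else 0)"

text \<open>Generators of the submodule of relations in the free k-module on A x B
(finitely supported functions A x B -> k).\<close>
definition tensor_rels ::
  "('k::comm_ring_1 \<Rightarrow> 'a::ab_group_add \<Rightarrow> 'a) \<Rightarrow> ('k \<Rightarrow> 'b::ab_group_add \<Rightarrow> 'b) \<Rightarrow>
   ('a \<times> 'b \<Rightarrow> 'k) set" where
  "tensor_rels sA sB =
     (\<lambda>(a, a', b). fdelta (a + a', b) - fdelta (a, b) - fdelta (a', b)) ` UNIV \<union>
     (\<lambda>(a, b, b'). fdelta (a, b + b') - fdelta (a, b) - fdelta (a, b')) ` UNIV \<union>
     (\<lambda>(c, a, b). fdelta (sA c a, b) - (\<lambda>q. c * fdelta (a, b) q)) ` UNIV \<union>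
     (\<lambda>(c, a, b). fdelta (a, sB c b) - (\<lambda>q. c * fdelta (a, b) q)) ` UNIV"

definition tensor_canon ::
  "('k::comm_ring_1 \<Rightarrow> 't::ab_group_add \<Rightarrow> 't) \<Rightarrow> ('a \<Rightarrow> 'b \<Rightarrow> 't) \<Rightarrow> ('a \<times> 'b \<Rightarrow> 'k) \<Rightarrow> 't" where
  "tensor_canon sT t f = (\<Sum>p\<in>{p. f p \<noteq> 0}. sT (f p) (t (fst p) (snd p)))"

text \<open>(T, t) is a tensor product of A and B over k: t is k-bilinear and the canonical map
from the free module on A x B onto T is surjective with kernel the submodule generated by
the bilinearity relations, i.e. T = F(A x B)/R with t a b the class of (a,b).\<close>
definition is_tensor ::
  "('k::comm_ring_1 \<Rightarrow> 'a::ab_group_add \<Rightarrow> 'a) \<Rightarrow> ('k \<Rightarrow> 'b::ab_group_add \<Rightarrow> 'b) \<Rightarrow>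
   ('k \<Rightarrow> 't::ab_group_add \<Rightarrow> 't) \<Rightarrow> ('a \<Rightarrow> 'b \<Rightarrow> 't) \<Rightarrow> bool" where
  "is_tensor sA sB sT t \<longleftrightarrow>
     module sA \<and> module sB \<and> module sT \<and> tbilinear sA sB sT t \<and>
     (\<forall>z. \<exists>f. finite {p. f p \<noteq> 0} \<and> z = tensor_canon sT t f) \<and>
     (\<forall>f. finite {p. f p \<noteq> 0} \<and> tensor_canon sT t f = 0 \<longrightarrow>
          f \<in> module.span (\<lambda>c g q. c * g q) (tensor_rels sA sB))"

definition tlift ::
  "('k::comm_ring_1 \<Rightarrow> 't::ab_group_add \<Rightarrow> 't) \<Rightarrow> ('k \<Rightarrow> 'c::ab_group_add \<Rightarrow> 'c) \<Rightarrow>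
   ('a \<Rightarrow> 'b \<Rightarrow> 't) \<Rightarrow> ('a \<Rightarrow> 'b \<Rightarrow> 'c) \<Rightarrow> 't \<Rightarrow> 'c" where
  "tlift sT sC t f = (THE g. module_hom sT sC g \<and> (\<forall>a b. g (t a b) = f a b))"

definition tmult ::
  "('k::comm_ring_1 \<Rightarrow> 't::ab_group_add \<Rightarrow> 't) \<Rightarrow> ('a \<Rightarrow> 'b \<Rightarrow> 't) \<Rightarrow>
   ('a \<Rightarrow> 'a \<Rightarrow> 'a) \<Rightarrow> ('b \<Rightarrow> 'b \<Rightarrow> 'b) \<Rightarrow> 't \<Rightarrow> 't \<Rightarrow> 't" where
  "tmult sT t mA mB = (THE m. tbilinear sT sT sT m \<and>
      (\<forall>a b a' b'. m (t a b) (t a' b') = t (mA a a') (mB b b')))"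

definition k_algebra :: "('k::comm_ring_1 \<Rightarrow> 'a::ring_1 \<Rightarrow> 'a) \<Rightarrow> bool" where
  "k_algebra s \<longleftrightarrow> module s \<and>
     (\<forall>c a b. s c (a * b) = s c a * b \<and> s c (a * b) = a * s c b)"

text \<open>H with comultiplication dH : H -> H (x) H (tensor (tHH, sHH)),
counit eps : H -> k; H (x) H (x) H is modelled as (H (x) H) (x) H (tensor (tHHH, sHHH)).\<close>
definition hopf_algebra ::
  "('k::comm_ring_1 \<Rightarrow> 'h::ring_1 \<Rightarrow> 'h) \<Rightarrow>
   ('k \<Rightarrow> 'hh::ab_group_add \<Rightarrow> 'hh) \<Rightarrow> ('h \<Rightarrow> 'h \<Rightarrow> 'hh) \<Rightarrow>
   ('k \<Rightarrow> 'hhh::ab_group_add \<Rightarrow> 'hhh) \<Rightarrow> ('hh \<Rightarrow> 'h \<Rightarrow> 'hhh) \<Rightarrow>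
   ('h \<Rightarrow> 'hh) \<Rightarrow> ('h \<Rightarrow> 'k) \<Rightarrow> bool" where
  "hopf_algebra sH sHH tHH sHHH tHHH dH eps \<longleftrightarrow>
     k_algebra sH \<and> is_tensor sH sH sHH tHH \<and> is_tensor sHH sH sHHH tHHH \<and>
     module_hom sH sHH dH \<and>
     (\<forall>a b. dH (a * b) = tmult sHH tHH (*) (*) (dH a) (dH b)) \<and> dH 1 = tHH 1 1 \<and>
     (\<forall>h. tlift sHH sHHH tHH (\<lambda>a b. tHHH (dH a) b) (dH h) =
          tlift sHH sHHH tHH (\<lambda>a b. tlift sHH sHHH tHH (\<lambda>c d. tHHH (tHH a c) d) (dH b)) (dH h)) \<and>
     module_hom sH (*) eps \<and> (\<forall>a b. eps (a * b) = eps a * eps b) \<and> eps 1 = 1 \<and>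
     (\<forall>h. tlift sHH sH tHH (\<lambda>a b. sH (eps a) b) (dH h) = h) \<and>
     (\<forall>h. tlift sHH sH tHH (\<lambda>a b. sH (eps b) a) (dH h) = h) \<and>
     (\<exists>S. module_hom sH sH S \<and>
        (\<forall>h. tlift sHH sH tHH (\<lambda>a b. S a * b) (dH h) = sH (eps h) 1) \<and>
        (\<forall>h. tlift sHH sH tHH (\<lambda>a b. a * S b) (dH h) = sH (eps h) 1))"

text \<open>E (x) H is the tensor (tEH, sEH); E (x) H (x) H is modelled as (E (x) H) (x) H
(tensor (tEHH, sEHH)).\<close>

abbreviation multEH where "multEH sEH tEH \<equiv> tmult sEH tEH (*) (*)"
abbreviation multEHH where "multEHH sEH tEH sEHH tEHH \<equiv> tmult sEHH tEHH (multEH sEH tEH) (*)"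

definition coact_id where
  "coact_id sEH tEH sEHH tEHH rho = tlift sEH sEHH tEH (\<lambda>e h. tEHH (rho e) h)"

text \<open>(id (x) dH) : E (x) H -> E (x) H (x) H\<close>
definition id_comult where
  "id_comult sHH tHH dH sEH tEH sEHH tEHH =
     tlift sEH sEHH tEH (\<lambda>e h. tlift sHH sEHH tHH (\<lambda>b c. tEHH (tEH e b) c) (dH h))"

definition id_counit where
  "id_counit sE eps sEH tEH = tlift sEH sE tEH (\<lambda>e h. sE (eps h) e)"

definition comodule_algebra where
  "comodule_algebra sH sHH tHH dH eps sE sEH tEH sEHH tEHH dE \<longleftrightarrow>
     k_algebra sE \<and> is_tensor sE sH sEH tEH \<and> is_tensor sEH sH sEHH tEHH \<and>
     module_hom sE sEH dE \<and>
     (\<forall>x y. dE (x * y) = multEH sEH tEH (dE x) (dE y)) \<and> dE 1 = tEH 1 1 \<and>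
     (\<forall>x. coact_id sEH tEH sEHH tEHH dE (dE x) = id_comult sHH tHH dH sEH tEH sEHH tEHH (dE x)) \<and>
     (\<forall>x. id_counit sE eps sEH tEH (dE x) = x)"

definition hopf_module_E where
  "hopf_module_E sHH tHH dH eps sE sEH tEH sEHH tEHH dE rho \<longleftrightarrow>
     module_hom sE sEH rho \<and>
     (\<forall>m. coact_id sEH tEH sEHH tEHH rho (rho m) = id_comult sHH tHH dH sEH tEH sEHH tEHH (rho m)) \<and>
     (\<forall>m. id_counit sE eps sEH tEH (rho m) = m) \<and>
     (\<forall>m s. rho (m * s) = multEH sEH tEH (rho m) (dE s))"

definition hopf_module_E_hom where
  "hopf_module_E_hom sE sEH tEH rho1 rho2 f \<longleftrightarrow>
     module_hom sE sE f \<and> (\<forall>m s. f (m * s) = f m * s) \<and>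
     (\<forall>m. rho2 (f m) = tlift sEH sEH tEH (\<lambda>e h. tEH (f e) h) (rho1 m))"

definition hopf_module_E_iso where
  "hopf_module_E_iso sE sEH tEH rho1 rho2 \<longleftrightarrow>
     (\<exists>f g. hopf_module_E_hom sE sEH tEH rho1 rho2 f \<and> hopf_module_E_hom sE sEH tEH rho2 rho1 g \<and>
        (\<forall>x. g (f x) = x) \<and> (\<forall>y. f (g y) = y))"

definition units_EH where
  "units_EH sEH tEH = {X. \<exists>Y. multEH sEH tEH X Y = tEH 1 1 \<and> multEH sEH tEH Y X = tEH 1 1}"

definition twisted_coaction where
  "twisted_coaction sEH tEH dE X = (\<lambda>x. multEH sEH tEH X (dE x))"

definition hopf_Z1 where
  "hopf_Z1 sHH tHH dH sEH tEH sEHH tEHH dE =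
     {X \<in> units_EH sEH tEH.
        multEHH sEH tEH sEHH tEHH (tEHH X 1) (coact_id sEH tEH sEHH tEHH dE X) =
        id_comult sHH tHH dH sEH tEH sEHH tEHH X}"

text \<open>X' = d1(x^-1) X d0(x) for a unit x of E with inverse y.\<close>
definition cohomologous where
  "cohomologous sEH tEH dE X X' \<longleftrightarrow>
     (\<exists>x y::'e::ring_1. x * y = 1 \<and> y * x = 1 \<and>
        X' = multEH sEH tEH (multEH sEH tEH (tEH y 1) X) (dE x))"

end

theory Submission
  imports Defs
begin


abbreviation supp :: "('p \<Rightarrow> 'k::zero) \<Rightarrow> 'p set" where "supp F \<equiv> {p. F p \<noteq> 0}"

lemma canon_superset:
  assumes "module sT" "finite S" "supp F \<subseteq> S"
  shows "tensor_canon sT t F = (\<Sum>p\<in>S. sT (F p) (t (fst p) (snd p)))"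
  unfolding tensor_canon_def
  by (rule sum.mono_neutral_left) (use assms module.scale_zero_left[OF assms(1)] in auto)

lemma canon_add:
  assumes "module sT" "finite (supp F)" "finite (supp G)"
  shows "tensor_canon sT t (F + G) = tensor_canon sT t F + tensor_canon sT t G"
proof -
  let ?S = "supp F \<union> supp G"
  have fs: "finite ?S" using assms by auto
  have "supp (F+G) \<subseteq> ?S" by auto
  then have "tensor_canon sT t (F + G) = (\<Sum>p\<in>?S. sT ((F+G) p) (t (fst p) (snd p)))"
    using canon_superset[OF assms(1) fs] by blast
  also have "\<dots> = (\<Sum>p\<in>?S. sT (F p) (t (fst p) (snd p))) + (\<Sum>p\<in>?S. sT (G p) (t (fst p) (snd p)))"
    by (simp add: module.scale_left_distrib[OF assms(1)] sum.distrib)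
  also have "\<dots> = tensor_canon sT t F + tensor_canon sT t G"
    using canon_superset[OF assms(1) fs, of F] canon_superset[OF assms(1) fs, of G] by auto
  finally show ?thesis .
qed

lemma canon_scale:
  assumes "module sT" "finite (supp F)"
  shows "tensor_canon sT t (\<lambda>q. c * F q) = sT c (tensor_canon sT t F)"
proof -
  have "supp (\<lambda>q. c * F q) \<subseteq> supp F" by auto
  then have "tensor_canon sT t (\<lambda>q. c * F q) = (\<Sum>p\<in>supp F. sT (c * F p) (t (fst p) (snd p)))"
    using canon_superset[where F="\<lambda>q. c * F q" and t=t, OF assms(1) assms(2)] by simp
  also have "\<dots> = sT c (tensor_canon sT t F)"
    unfolding tensor_canon_def
    by (simp add: module.scale_sum_right[OF assms(1)] module.scale_scale[OF assms(1), symmetric])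
  finally show ?thesis .
qed

lemma canon_minus:
  assumes "module sT" "finite (supp F)"
  shows "tensor_canon sT t (- F) = - tensor_canon sT t F"
proof -
  have "- F = (\<lambda>q. (-1) * F q)" by auto
  then show ?thesis using canon_scale[OF assms, of t "-1"] module.scale_minus_left[OF assms(1)]
    by (simp add: module.scale_one[OF assms(1)])
qed

lemma canon_diff:
  assumes "module sT" "finite (supp F)" "finite (supp G)"
  shows "tensor_canon sT t (F - G) = tensor_canon sT t F - tensor_canon sT t G"
proof -
  have "finite (supp (-G))" using assms(3) by auto
  then show ?thesis using canon_add[OF assms(1) assms(2), of "-G" t] canon_minus[OF assms(1) assms(3), of t]
    by simp
qed

lemma supp_fdelta: "{q. (fdelta p q :: 'k::comm_ring_1) \<noteq> 0} \<subseteq> {p}"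
  by (auto simp: fdelta_def split: if_splits)

lemma finite_supp_fdelta: "finite {q. (fdelta p q :: 'k::comm_ring_1) \<noteq> 0}"
  by (rule finite_subset[OF supp_fdelta]) simp

lemma canon_fdelta:
  assumes "module sT"
  shows "tensor_canon sT t (fdelta (a,b)) = t a b"
  using canon_superset[OF assms, of "{(a,b)}" "fdelta (a,b)" t] supp_fdelta[of "(a,b)"]
  by (simp add: fdelta_def module.scale_one[OF assms])

lemma module_fun: "module (\<lambda>c g q. (c::'k::comm_ring_1) * g q)"
  by unfold_locales (auto simp: fun_eq_iff algebra_simps)

lemma module_funC:
  assumes "module sC" shows "module (\<lambda>c g x. sC c (g x))"
  using assms by (simp add: module_def fun_eq_iff)

lemma canon_rels:
  fixes sA :: "'k::comm_ring_1 \<Rightarrow> 'a::ab_group_add \<Rightarrow> 'a" and sB :: "'k \<Rightarrow> 'b::ab_group_add \<Rightarrow> 'b"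
    and sC :: "'k \<Rightarrow> 'c::ab_group_add \<Rightarrow> 'c" and f :: "'a \<Rightarrow> 'b \<Rightarrow> 'c"
  assumes mC: "module sC" and fb: "tbilinear sA sB sC f" and F: "F \<in> tensor_rels sA sB"
  shows "finite (supp F) \<and> tensor_canon sC f F = 0"
proof -
  have l1: "module_hom sA sC (\<lambda>a. f a b)" for b using fb by (simp add: tbilinear_def)
  have l2: "module_hom sB sC (f a)" for a using fb by (simp add: tbilinear_def)
  have fd: "finite (supp (fdelta p :: _ \<Rightarrow> 'k))" for p :: "'a \<times> 'b" by (rule finite_supp_fdelta)
  have fdc: "finite (supp (\<lambda>q. (c::'k) * fdelta p q))" for c and p :: "'a \<times> 'b"
    by (rule finite_subset[OF _ fd[of p]]) auto
  have cd: "tensor_canon sC f (fdelta p) = f (fst p) (snd p)" for p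
    using canon_fdelta[OF mC, of f "fst p" "snd p"] by simp
  have fdiff: "finite (supp (G - H))" if "finite (supp G)" "finite (supp H)" for G H :: "'a \<times> 'b \<Rightarrow> 'k"
    by (rule finite_subset[of _ "supp G \<union> supp H"]) (use that in auto)
  have c1: "finite (supp F) \<and> tensor_canon sC f F = 0"
    if F: "F = fdelta (a + a', b) - fdelta (a, b) - fdelta (a', b)" for a a' b
  proof -
    have "tensor_canon sC f F = f (a+a') b - f a b - f a' b"
      unfolding F by (simp only: fdiff fd canon_diff[OF mC] cd fst_conv snd_conv)
    moreover have "finite (supp F)" unfolding F by (intro fdiff fd fdc)
    ultimately show ?thesis by (simp add: module_hom.add[OF l1])
  qed
  have c2: "finite (supp F) \<and> tensor_canon sC f F = 0"
    if F: "F = fdelta (a, b + b') - fdelta (a, b) - fdelta (a, b')" for a b b'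
  proof -
    have "tensor_canon sC f F = f a (b + b') - f a b - f a b'"
      unfolding F by (simp only: fdiff fd canon_diff[OF mC] cd fst_conv snd_conv)
    moreover have "finite (supp F)" unfolding F by (intro fdiff fd fdc)
    ultimately show ?thesis by (simp add: module_hom.add[OF l2])
  qed
  have c3: "finite (supp F) \<and> tensor_canon sC f F = 0"
    if F: "F = fdelta (sA c a, b) - (\<lambda>q. c * fdelta (a, b) q)" for c a b
  proof -
    have "tensor_canon sC f F = f (sA c a) b - sC c (f a b)"
      unfolding F by (simp only: fdiff fd fdc canon_diff[OF mC] canon_scale[OF mC] cd fst_conv snd_conv)
    moreover have "finite (supp F)" unfolding F by (intro fdiff fd fdc)
    ultimately show ?thesis by (simp add: module_hom.scale[OF l1])
  qed
  have c4: "finite (supp F) \<and> tensor_canon sC f F = 0"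
    if F: "F = fdelta (a, sB c b) - (\<lambda>q. c * fdelta (a, b) q)" for c a b
  proof -
    have "tensor_canon sC f F = f a (sB c b) - sC c (f a b)"
      unfolding F by (simp only: fdiff fd fdc canon_diff[OF mC] canon_scale[OF mC] cd fst_conv snd_conv)
    moreover have "finite (supp F)" unfolding F by (intro fdiff fd fdc)
    ultimately show ?thesis by (simp add: module_hom.scale[OF l2])
  qed
  from F[unfolded tensor_rels_def] show ?thesis
  proof (elim UnE imageE)
    fix x :: "'a \<times> 'a \<times> 'b" assume h: "F = (\<lambda>(a, a', b). fdelta (a + a', b) - fdelta (a, b) - fdelta (a', b)) x"
    obtain a a' b where "x = (a,a',b)" by (cases x)
    with h have "F = fdelta (a + a', b) - fdelta (a, b) - fdelta (a', b)" by simp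
    then show ?thesis by (rule c1)
  next
    fix x :: "'a \<times> 'b \<times> 'b" assume h: "F = (\<lambda>(a, b, b'). fdelta (a, b + b') - fdelta (a, b) - fdelta (a, b')) x"
    obtain a b b' where "x = (a,b,b')" by (cases x)
    with h have "F = fdelta (a, b + b') - fdelta (a, b) - fdelta (a, b')" by simp
    then show ?thesis by (rule c2)
  next
    fix x :: "'k \<times> 'a \<times> 'b" assume h: "F = (\<lambda>(c, a, b). fdelta (sA c a, b) - (\<lambda>q. c * fdelta (a, b) q)) x"
    obtain c a b where "x = (c,a,b)" by (cases x)
    with h have "F = fdelta (sA c a, b) - (\<lambda>q. c * fdelta (a, b) q)" by simp
    then show ?thesis by (rule c3)
  next
    fix x :: "'k \<times> 'a \<times> 'b" assume h: "F = (\<lambda>(c, a, b). fdelta (a, sB c b) - (\<lambda>q. c * fdelta (a, b) q)) x"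
    obtain c a b where "x = (c,a,b)" by (cases x)
    with h have "F = fdelta (a, sB c b) - (\<lambda>q. c * fdelta (a, b) q)" by simp
    then show ?thesis by (rule c4)
  qed
qed

lemma canon_span:
  assumes mC: "module sC" and fb: "tbilinear sA sB sC f"
    and F: "F \<in> module.span (\<lambda>c g q. c * g q) (tensor_rels sA sB)"
  shows "finite (supp F) \<and> tensor_canon sC f F = 0"
proof (rule module.span_induct[OF module_fun F])
  show "module.subspace (\<lambda>c g q. c * g q) (Collect (\<lambda>F. finite (supp F) \<and> tensor_canon sC f F = 0))"
    unfolding module.subspace_def[OF module_fun]
  proof (intro conjI allI impI ballI)
    show "0 \<in> Collect (\<lambda>F. finite (supp F) \<and> tensor_canon sC f F = 0)"
      by (simp add: tensor_canon_def)
  next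
    fix x y assume x: "x \<in> Collect (\<lambda>F. finite (supp F) \<and> tensor_canon sC f F = 0)"
      and y: "y \<in> Collect (\<lambda>F. finite (supp F) \<and> tensor_canon sC f F = 0)"
    have s: "supp (x + y) \<subseteq> supp x \<union> supp y" by auto
    have "finite (supp x)" "finite (supp y)" using x y by auto
    then show "x + y \<in> Collect (\<lambda>F. finite (supp F) \<and> tensor_canon sC f F = 0)"
      using x y canon_add[OF mC, of x y f] finite_subset[OF s] by simp
  next
    fix c x assume x: "x \<in> Collect (\<lambda>F. finite (supp F) \<and> tensor_canon sC f F = 0)"
    have s: "supp (\<lambda>q. c * x q) \<subseteq> supp x" by auto
    have "finite (supp x)" using x by auto
    then show "(\<lambda>q. c * x q) \<in> Collect (\<lambda>F. finite (supp F) \<and> tensor_canon sC f F = 0)"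
      using x canon_scale[OF mC, of x f c] finite_subset[OF s] module.scale_zero_right[OF mC] by simp
  qed
next
  fix x assume "x \<in> tensor_rels sA sB" then show "finite (supp x) \<and> tensor_canon sC f x = 0"
    using canon_rels[OF mC fb] by blast
qed



lemma hom_comp: "module_hom s1 s2 f \<Longrightarrow> module_hom s2 s3 g \<Longrightarrow> module_hom s1 s3 (\<lambda>x. g (f x))"
  using module_hom_compose[of s1 s2 f s3 g] by (simp add: comp_def)

lemma hom_canon:
  assumes g: "module_hom sT sC g"
  shows "g (tensor_canon sT t F) = tensor_canon sC (\<lambda>a b. g (t a b)) F"
  unfolding tensor_canon_def by (simp add: module_hom.sum[OF g] module_hom.scale[OF g])

lemma is_tensorD:
  assumes "is_tensor sA sB sT t"
  shows "module sA" "module sB" "module sT" "tbilinear sA sB sT t"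
    "\<exists>F. finite (supp F) \<and> z = tensor_canon sT t F"
    "finite (supp F) \<Longrightarrow> tensor_canon sT t F = 0 \<Longrightarrow> F \<in> module.span (\<lambda>c g q. c * g q) (tensor_rels sA sB)"
  using assms unfolding is_tensor_def by blast+

lemma tbilD:
  assumes "tbilinear sA sB sC f"
  shows "module_hom sB sC (f a)" "module_hom sA sC (\<lambda>a. f a b)"
  using assms unfolding tbilinear_def by blast+

lemma tbilI:
  assumes "\<And>a. module_hom sB sC (f a)" "\<And>b. module_hom sA sC (\<lambda>a. f a b)"
  shows "tbilinear sA sB sC f"
  using assms unfolding tbilinear_def by blast

lemma tensor_hom_eq:
  assumes T: "is_tensor sA sB sT t" and g1: "module_hom sT sC g1" and g2: "module_hom sT sC g2"
    and eq: "\<And>a b. g1 (t a b) = g2 (t a b)"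
  shows "g1 z = g2 z"
proof -
  from is_tensorD(5)[OF T] obtain F where F: "z = tensor_canon sT t F" by blast
  have e: "(\<lambda>a b. g1 (t a b)) = (\<lambda>a b. g2 (t a b))" using eq by auto
  show ?thesis unfolding F hom_canon[OF g1] hom_canon[OF g2] e ..
qed

lemma tensor_ex_lift:
  assumes T: "is_tensor sA sB sT t" and mC: "module sC" and fb: "tbilinear sA sB sC f"
  shows "\<exists>g. module_hom sT sC g \<and> (\<forall>a b. g (t a b) = f a b)"
proof -
  have mT: "module sT" using is_tensorD[OF T] by blast
  have ker: "tensor_canon sC f F = 0" if "finite (supp F)" "tensor_canon sT t F = 0" for F
    using canon_span[OF mC fb is_tensorD(6)[OF T that]] by blast
  have wd: "tensor_canon sC f F = tensor_canon sC f G"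
    if F: "finite (supp F)" and G: "finite (supp G)" and e: "tensor_canon sT t F = tensor_canon sT t G" for F G
  proof -
    have s: "supp (F - G) \<subseteq> supp F \<union> supp G" by auto
    have fd: "finite (supp (F - G))" using finite_subset[OF s] F G by blast
    have "tensor_canon sT t (F - G) = 0" using canon_diff[OF mT F G] e by simp
    then have "tensor_canon sC f (F - G) = 0" using ker fd by blast
    then show ?thesis using canon_diff[OF mC F G] by simp
  qed
  define R where "R z = (SOME F. finite (supp F) \<and> z = tensor_canon sT t F)" for z
  have R: "finite (supp (R z)) \<and> z = tensor_canon sT t (R z)" for z
    using someI_ex[OF is_tensorD(5)[OF T, where z=z]] by (simp add: R_def)
  define g where "g z = tensor_canon sC f (R z)" for z
  have gF: "g (tensor_canon sT t F) = tensor_canon sC f F" if "finite (supp F)" for F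
    unfolding g_def by (rule wd) (use R that in auto)
  have "module_hom sT sC g"
    unfolding module_hom_iff
  proof (intro conjI allI mT mC)
    fix x y
    obtain F G where F: "finite (supp F)" "x = tensor_canon sT t F" and G: "finite (supp G)" "y = tensor_canon sT t G"
      using is_tensorD(5)[OF T] by metis
    have s: "supp (F + G) \<subseteq> supp F \<union> supp G" by auto
    have fd: "finite (supp (F + G))" using finite_subset[OF s] F G by blast
    have xy: "x + y = tensor_canon sT t (F + G)" using canon_add[OF mT F(1) G(1)] F G by simp
    have "g (x + y) = tensor_canon sC f (F + G)" unfolding xy by (rule gF[OF fd])
    also have "\<dots> = tensor_canon sC f F + tensor_canon sC f G" by (rule canon_add[OF mC F(1) G(1)])
    also have "\<dots> = g x + g y" using gF[OF F(1)] gF[OF G(1)] F G by simp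
    finally show "g (x + y) = g x + g y" .
  next
    fix c x
    obtain F where F: "finite (supp F)" "x = tensor_canon sT t F"
      using is_tensorD(5)[OF T] by metis
    have s: "supp (\<lambda>q. c * F q) \<subseteq> supp F" by auto
    have fd: "finite (supp (\<lambda>q. c * F q))" using finite_subset[OF s] F by blast
    have "sT c x = tensor_canon sT t (\<lambda>q. c * F q)" using canon_scale[OF mT F(1)] F by simp
    then show "g (sT c x) = sC c (g x)" using gF[OF fd] gF[OF F(1)] canon_scale[OF mC F(1)] F by simp
  qed
  moreover have "g (t a b) = f a b" for a b
    using gF[OF finite_supp_fdelta[of "(a,b)"]] unfolding canon_fdelta[OF mT] canon_fdelta[OF mC] .
  ultimately show ?thesis by blast
qed

lemma tlift_ex1:
  assumes T: "is_tensor sA sB sT t" and mC: "module sC" and fb: "tbilinear sA sB sC f"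
  shows "\<exists>!g. module_hom sT sC g \<and> (\<forall>a b. g (t a b) = f a b)"
proof -
  obtain g where g: "module_hom sT sC g \<and> (\<forall>a b. g (t a b) = f a b)" using tensor_ex_lift[OF assms] by blast
  show ?thesis
  proof (rule ex1I[of _ g])
    show "module_hom sT sC g \<and> (\<forall>a b. g (t a b) = f a b)" by (rule g)
  next
    fix h assume h: "module_hom sT sC h \<and> (\<forall>a b. h (t a b) = f a b)"
    show "h = g" by (rule ext, rule tensor_hom_eq[OF T]) (use g h in auto)
  qed
qed

lemma tlift:
  assumes T: "is_tensor sA sB sT t" and mC: "module sC" and fb: "tbilinear sA sB sC f"
  shows tlift_hom: "module_hom sT sC (tlift sT sC t f)"
    and tlift_gen: "tlift sT sC t f (t a b) = f a b"
  using theI'[OF tlift_ex1[OF assms]] unfolding tlift_def by blast+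

lemma bil_eq:
  assumes T1: "is_tensor sA sB sT t" and T2: "is_tensor sA' sB' sT' t'"
    and b1: "tbilinear sT sT' sC m1" and b2: "tbilinear sT sT' sC m2"
    and eq: "\<And>a b a' b'. m1 (t a b) (t' a' b') = m2 (t a b) (t' a' b')"
  shows "m1 u v = m2 u v"
proof -
  have 1: "m1 (t a b) v = m2 (t a b) v" for a b
    by (rule tensor_hom_eq[OF T2 tbilD(1)[OF b1] tbilD(1)[OF b2]]) (rule eq)
  show ?thesis
    by (rule tensor_hom_eq[OF T1 tbilD(2)[OF b1] tbilD(2)[OF b2], where z=u]) (rule 1)
qed

lemma fun_sum_apply: "(\<Sum>p\<in>S. h p) x = (\<Sum>p\<in>S. h p x)"
  by (induct S rule: infinite_finite_induct) auto

lemma module_pairI: "module s1 \<Longrightarrow> module s2 \<Longrightarrow> module_pair s1 s2"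
  by (simp add: module_pair_def)

lemma tmult_ex:
  fixes sT :: "'k::comm_ring_1 \<Rightarrow> 't::ab_group_add \<Rightarrow> 't"
  assumes T: "is_tensor sA sB sT t" and bA: "tbilinear sA sA sA mA" and bB: "tbilinear sB sB sB mB"
  shows "\<exists>m. tbilinear sT sT sT m \<and> (\<forall>a b a' b'. m (t a b) (t a' b') = t (mA a a') (mB b b'))"
proof -
  note tb = is_tensorD(4)[OF T]
  have mT: "module sT" and mA: "module sA" and mB: "module sB" using is_tensorD[OF T] by blast+
  interpret mp: module_pair sT sT by (rule module_pairI[OF mT mT])
  define sF where "sF = (\<lambda>c (g::'t \<Rightarrow> 't) x. sT c (g x))"
  have mF: "module sF" unfolding sF_def by (rule module_funC[OF mT])
  have fab: "tbilinear sA sB sT (\<lambda>a' b'. t (mA a a') (mB b b'))" for a b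
  proof (rule tbilI)
    fix a' show "module_hom sB sT (\<lambda>b'. t (mA a a') (mB b b'))"
      by (rule hom_comp[OF tbilD(1)[OF bB] tbilD(1)[OF tb]])
  next
    fix b' show "module_hom sA sT (\<lambda>a'. t (mA a a') (mB b b'))"
      by (rule hom_comp[OF tbilD(1)[OF bA] tbilD(2)[OF tb]])
  qed
  define L where "L a b = tlift sT sT t (\<lambda>a' b'. t (mA a a') (mB b b'))" for a b
  have Lhom: "module_hom sT sT (L a b)" for a b unfolding L_def by (rule tlift_hom[OF T mT fab])
  have Lgen: "L a b (t a' b') = t (mA a a') (mB b b')" for a b a' b' unfolding L_def by (rule tlift_gen[OF T mT fab])
  have Lbil: "tbilinear sA sB sF L"
  proof (rule tbilI)
    fix a show "module_hom sB sF (L a)"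
      unfolding module_hom_iff
    proof (intro conjI allI mB mF)
      fix b1 b2 show "L a (b1 + b2) = L a b1 + L a b2"
      proof (rule ext)
        fix z show "L a (b1 + b2) z = (L a b1 + L a b2) z"
          unfolding plus_fun_def
          by (rule tensor_hom_eq[OF T Lhom mp.module_hom_add[OF Lhom Lhom]])
             (simp add: Lgen module_hom.add[OF tbilD(2)[OF bB]] module_hom.add[OF tbilD(1)[OF tb]])
      qed
    next
      fix c b show "L a (sB c b) = sF c (L a b)"
      proof (rule ext)
        fix z show "L a (sB c b) z = sF c (L a b) z"
          unfolding sF_def
          by (rule tensor_hom_eq[OF T Lhom mp.module_hom_scale[OF Lhom]])
             (simp add: Lgen module_hom.scale[OF tbilD(2)[OF bB]] module_hom.scale[OF tbilD(1)[OF tb]])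
      qed
    qed
  next
    fix b show "module_hom sA sF (\<lambda>a. L a b)"
      unfolding module_hom_iff
    proof (intro conjI allI mA mF)
      fix a1 a2 show "L (a1 + a2) b = L a1 b + L a2 b"
      proof (rule ext)
        fix z show "L (a1 + a2) b z = (L a1 b + L a2 b) z"
          unfolding plus_fun_def
          by (rule tensor_hom_eq[OF T Lhom mp.module_hom_add[OF Lhom Lhom]])
             (simp add: Lgen module_hom.add[OF tbilD(2)[OF bA]] module_hom.add[OF tbilD(2)[OF tb]])
      qed
    next
      fix c a show "L (sA c a) b = sF c (L a b)"
      proof (rule ext)
        fix z show "L (sA c a) b z = sF c (L a b) z"
          unfolding sF_def
          by (rule tensor_hom_eq[OF T Lhom mp.module_hom_scale[OF Lhom]])
             (simp add: Lgen module_hom.scale[OF tbilD(2)[OF bA]] module_hom.scale[OF tbilD(2)[OF tb]])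
      qed
    qed
  qed
  define M where "M = tlift sT sF t L"
  have Mhom: "module_hom sT sF M" unfolding M_def by (rule tlift_hom[OF T mF Lbil])
  have Mgen: "M (t a b) = L a b" for a b unfolding M_def by (rule tlift_gen[OF T mF Lbil])
  have Mu: "module_hom sT sT (M u)" for u
  proof -
    obtain F where F: "u = tensor_canon sT t F" using is_tensorD(5)[OF T] by blast
    have "M u = tensor_canon sF (\<lambda>a b. M (t a b)) F" unfolding F by (rule hom_canon[OF Mhom])
    also have "\<dots> = (\<lambda>x. \<Sum>p\<in>supp F. sT (F p) (L (fst p) (snd p) x))"
      unfolding tensor_canon_def Mgen sF_def by (rule ext) (simp add: fun_sum_apply)
    finally have e: "M u = (\<lambda>x. \<Sum>p\<in>supp F. sT (F p) (L (fst p) (snd p) x))" .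
    show ?thesis unfolding e
      by (rule mp.module_hom_sum) (auto intro: mp.module_hom_scale Lhom mT)
  qed
  have "tbilinear sT sT sT (\<lambda>u v. M u v)"
  proof (rule tbilI)
    fix u show "module_hom sT sT (M u)" by (rule Mu)
  next
    fix v show "module_hom sT sT (\<lambda>u. M u v)"
      unfolding module_hom_iff
      using module_hom.add[OF Mhom] module_hom.scale[OF Mhom] mT
      by (auto simp: sF_def plus_fun_def fun_eq_iff)
  qed
  moreover have "M (t a b) (t a' b') = t (mA a a') (mB b b')" for a b a' b'
    by (simp add: Mgen Lgen)
  ultimately show ?thesis by blast
qed

lemma tmult_ex1:
  assumes T: "is_tensor sA sB sT t" and bA: "tbilinear sA sA sA mA" and bB: "tbilinear sB sB sB mB"
  shows "\<exists>!m. tbilinear sT sT sT m \<and> (\<forall>a b a' b'. m (t a b) (t a' b') = t (mA a a') (mB b b'))"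
proof -
  obtain m where m: "tbilinear sT sT sT m \<and> (\<forall>a b a' b'. m (t a b) (t a' b') = t (mA a a') (mB b b'))"
    using tmult_ex[OF assms] by blast
  show ?thesis
  proof (rule ex1I[of _ m])
    show "tbilinear sT sT sT m \<and> (\<forall>a b a' b'. m (t a b) (t a' b') = t (mA a a') (mB b b'))" by (rule m)
  next
    fix h assume h: "tbilinear sT sT sT h \<and> (\<forall>a b a' b'. h (t a b) (t a' b') = t (mA a a') (mB b b'))"
    show "h = m" by (intro ext, rule bil_eq[OF T T]) (use m h in auto)
  qed
qed

lemma tmult:
  assumes T: "is_tensor sA sB sT t" and bA: "tbilinear sA sA sA mA" and bB: "tbilinear sB sB sB mB"
  shows tmult_bil: "tbilinear sT sT sT (tmult sT t mA mB)"
    and tmult_gen: "tmult sT t mA mB (t a b) (t a' b') = t (mA a a') (mB b b')"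
  using theI'[OF tmult_ex1[OF assms]] unfolding tmult_def by blast+



lemma bil_comp_out:
  "tbilinear s1 s2 s3 m \<Longrightarrow> module_hom s3 s4 f \<Longrightarrow> tbilinear s1 s2 s4 (\<lambda>u v. f (m u v))"
  by (rule tbilI) (auto intro: hom_comp dest: tbilD)

lemma bil_comp_in:
  "tbilinear s1 s2 s3 m \<Longrightarrow> module_hom s0 s1 f \<Longrightarrow> module_hom s0' s2 g \<Longrightarrow>
   tbilinear s0 s0' s3 (\<lambda>u v. m (f u) (g v))"
proof (rule tbilI)
  fix a assume "tbilinear s1 s2 s3 m" "module_hom s0' s2 g"
  then show "module_hom s0' s3 (\<lambda>v. m (f a) (g v))" by (auto intro: hom_comp dest: tbilD)
next
  fix b assume "tbilinear s1 s2 s3 m" "module_hom s0 s1 f"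
  then show "module_hom s0 s3 (\<lambda>u. m (f u) (g b))" by (auto intro: hom_comp dest: tbilD)
qed

lemma ring_bil:
  fixes s :: "'k::comm_ring_1 \<Rightarrow> 'a::ring_1 \<Rightarrow> 'a"
  assumes "k_algebra s" shows "tbilinear s s s (*)"
proof -
  have m: "module s" and c: "\<And>c a b. s c (a * b) = s c a * b \<and> s c (a * b) = a * s c b"
    using assms unfolding k_algebra_def by blast+
  have c1: "s c a * b = s c (a * b)" and c2: "a * s c b = s c (a * b)" for c a b using c by metis+
  show ?thesis
    by (rule tbilI) (simp_all add: module_hom_iff m c1 c2 distrib_left distrib_right)
qed

lemma tmult_assoc:
  assumes T: "is_tensor sA sB sT t" and bA: "tbilinear sA sA sA mA" and bB: "tbilinear sB sB sB mB"
    and aA: "\<And>x y z. mA (mA x y) z = mA x (mA y z)" and aB: "\<And>x y z. mB (mB x y) z = mB x (mB y z)"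
  shows "tmult sT t mA mB (tmult sT t mA mB u v) w = tmult sT t mA mB u (tmult sT t mA mB v w)"
proof -
  define m where "m = tmult sT t mA mB"
  have mb: "tbilinear sT sT sT m" unfolding m_def by (rule tmult_bil[OF assms(1-3)])
  have mg: "m (t a b) (t a' b') = t (mA a a') (mB b b')" for a b a' b'
    unfolding m_def by (rule tmult_gen[OF assms(1-3)])
  note l1 = tbilD(1)[OF mb] and l2 = tbilD(2)[OF mb]
  have s1: "m (m (t a b) (t a' b')) w = m (t a b) (m (t a' b') w)" for a b a' b' w
    by (rule tensor_hom_eq[OF T l1 hom_comp[OF l1 l1]]) (simp add: mg aA aB)
  have s2: "m (m (t a b) v) w = m (t a b) (m v w)" for a b v w
    by (rule tensor_hom_eq[OF T hom_comp[OF l1 l2] hom_comp[OF l2 l1], where z=v]) (rule s1)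
  have "m (m u v) w = m u (m v w)"
    by (rule tensor_hom_eq[OF T hom_comp[OF l2 l2] l2, where z=u]) (rule s2)
  then show ?thesis unfolding m_def .
qed

lemma tmult_unit:
  assumes T: "is_tensor sA sB sT t" and bA: "tbilinear sA sA sA mA" and bB: "tbilinear sB sB sB mB"
    and uA: "\<And>x. mA eA x = x \<and> mA x eA = x" and uB: "\<And>x. mB eB x = x \<and> mB x eB = x"
  shows "tmult sT t mA mB (t eA eB) u = u" and "tmult sT t mA mB u (t eA eB) = u"
proof -
  define m where "m = tmult sT t mA mB"
  have mb: "tbilinear sT sT sT m" unfolding m_def by (rule tmult_bil[OF assms(1-3)])
  have mg: "m (t a b) (t a' b') = t (mA a a') (mB b b')" for a b a' b'
    unfolding m_def by (rule tmult_gen[OF assms(1-3)])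
  have mT: "module sT" using is_tensorD[OF T] by blast
  have "m (t eA eB) u = id u"
    by (rule tensor_hom_eq[OF T tbilD(1)[OF mb] module.module_hom_id[OF mT]]) (simp add: mg uA uB)
  then show "tmult sT t mA mB (t eA eB) u = u" unfolding m_def by simp
  have "m u (t eA eB) = id u"
    by (rule tensor_hom_eq[OF T tbilD(2)[OF mb] module.module_hom_id[OF mT]]) (simp add: mg uA uB)
  then show "tmult sT t mA mB u (t eA eB) = u" unfolding m_def by simp
qed



locale setting =
  fixes sH :: "'k::comm_ring_1 \<Rightarrow> 'h::ring_1 \<Rightarrow> 'h"
    and sHH :: "'k \<Rightarrow> 'hh::ab_group_add \<Rightarrow> 'hh" and tHH :: "'h \<Rightarrow> 'h \<Rightarrow> 'hh"
    and dH :: "'h \<Rightarrow> 'hh" and eps :: "'h \<Rightarrow> 'k"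
    and sE :: "'k \<Rightarrow> 'e::ring_1 \<Rightarrow> 'e"
    and sEH :: "'k \<Rightarrow> 'eh::ab_group_add \<Rightarrow> 'eh" and tEH :: "'e \<Rightarrow> 'h \<Rightarrow> 'eh"
    and sEHH :: "'k \<Rightarrow> 'ehh::ab_group_add \<Rightarrow> 'ehh" and tEHH :: "'eh \<Rightarrow> 'h \<Rightarrow> 'ehh"
    and dE :: "'e \<Rightarrow> 'eh"
  assumes kH: "k_algebra sH" and THH: "is_tensor sH sH sHH tHH"
    and dHlin: "module_hom sH sHH dH"
    and dHmult: "\<And>a b. dH (a * b) = tmult sHH tHH (*) (*) (dH a) (dH b)"
    and epslin: "module_hom sH (*) eps" and epsmult: "\<And>a b. eps (a * b) = eps a * eps b"
    and eps1: "eps 1 = 1"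
    and counitH: "\<And>h. tlift sHH sH tHH (\<lambda>a b. sH (eps b) a) (dH h) = h"
    and kE: "k_algebra sE" and TEH: "is_tensor sE sH sEH tEH" and TEHH: "is_tensor sEH sH sEHH tEHH"
    and dElin: "module_hom sE sEH dE"
    and dEmult: "\<And>x y. dE (x * y) = multEH sEH tEH (dE x) (dE y)" and dE1: "dE 1 = tEH 1 1"
    and coassocE: "\<And>x. coact_id sEH tEH sEHH tEHH dE (dE x) = id_comult sHH tHH dH sEH tEH sEHH tEHH (dE x)"
    and counitE: "\<And>x. id_counit sE eps sEH tEH (dE x) = x"
begin

abbreviation "mm \<equiv> multEH sEH tEH"
abbreviation "mmm \<equiv> multEHH sEH tEH sEHH tEHH"
abbreviation "mH \<equiv> tmult sHH tHH (*) (*)"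

lemma mods: "module sE" "module sH" "module sEH" "module sEHH" "module sHH"
  using is_tensorD[OF TEH] is_tensorD[OF TEHH] is_tensorD[OF THH] by blast+

lemma mk: "module ((*) :: 'k \<Rightarrow> 'k \<Rightarrow> 'k)" using epslin by (simp add: module_hom_iff)

lemma bE: "tbilinear sE sE sE (*)" by (rule ring_bil[OF kE])
lemma bH: "tbilinear sH sH sH (*)" by (rule ring_bil[OF kH])
lemma tEHb: "tbilinear sE sH sEH tEH" by (rule is_tensorD(4)[OF TEH])
lemma tEHHb: "tbilinear sEH sH sEHH tEHH" by (rule is_tensorD(4)[OF TEHH])
lemma tHHb: "tbilinear sH sH sHH tHH" by (rule is_tensorD(4)[OF THH])

lemma mm_bil: "tbilinear sEH sEH sEH mm" by (rule tmult_bil[OF TEH bE bH])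
lemma mm_gen: "mm (tEH a b) (tEH a' b') = tEH (a * a') (b * b')" by (rule tmult_gen[OF TEH bE bH])
lemma mm_assoc: "mm (mm u v) w = mm u (mm v w)" by (rule tmult_assoc[OF TEH bE bH mult.assoc mult.assoc])
lemma mm_unitL: "mm (tEH 1 1) u = u" by (rule tmult_unit(1)[OF TEH bE bH]) auto
lemma mm_unitR: "mm u (tEH 1 1) = u" by (rule tmult_unit(2)[OF TEH bE bH]) auto

lemma mmm_bil: "tbilinear sEHH sEHH sEHH mmm" by (rule tmult_bil[OF TEHH mm_bil bH])
lemma mmm_gen: "mmm (tEHH u h) (tEHH u' h') = tEHH (mm u u') (h * h')" by (rule tmult_gen[OF TEHH mm_bil bH])
lemma mmm_assoc: "mmm (mmm u v) w = mmm u (mmm v w)" by (rule tmult_assoc[OF TEHH mm_bil bH mm_assoc mult.assoc])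

lemma mH_bil: "tbilinear sHH sHH sHH mH" by (rule tmult_bil[OF THH bH bH])
lemma mH_gen: "mH (tHH a b) (tHH a' b') = tHH (a * a') (b * b')" by (rule tmult_gen[OF THH bH bH])

lemma eps_scale_hom:
  assumes "module s" shows "module_hom sH s (\<lambda>h. s (eps h) x)"
  by (rule hom_comp[OF epslin module.module_hom_scale_left[OF assms]])

abbreviation "U \<equiv> id_counit sE eps sEH tEH"
lemma U_bil: "tbilinear sE sH sE (\<lambda>e h. sE (eps h) e)"
  by (rule tbilI) (simp_all add: eps_scale_hom mods module.module_hom_scale_self[OF mods(1)])
lemma U_hom: "module_hom sEH sE U" unfolding id_counit_def by (rule tlift_hom[OF TEH mods(1) U_bil])
lemma U_gen: "U (tEH e h) = sE (eps h) e" unfolding id_counit_def by (rule tlift_gen[OF TEH mods(1) U_bil])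

lemma kE_c: "sE c a * b = sE c (a * b)" "a * sE c b = sE c (a * b)"
  using kE unfolding k_algebra_def by metis+

lemma U_mult: "U (mm u v) = U u * U v"
proof (rule bil_eq[OF TEH TEH bil_comp_out[OF mm_bil U_hom] bil_comp_in[OF bE U_hom U_hom]])
  fix a b a' b'
  show "U (mm (tEH a b) (tEH a' b')) = U (tEH a b) * U (tEH a' b')"
    by (simp add: mm_gen U_gen epsmult kE_c module.scale_scale[OF mods(1)] mult.commute)
qed

lemma coact_bil:
  assumes "module_hom sE sEH rho"
  shows "tbilinear sE sH sEHH (\<lambda>e h. tEHH (rho e) h)"
  by (rule tbilI) (auto intro: hom_comp[OF assms] tbilD[OF tEHHb])

lemma coact_hom: "module_hom sE sEH rho \<Longrightarrow> module_hom sEH sEHH (coact_id sEH tEH sEHH tEHH rho)"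
  unfolding coact_id_def by (rule tlift_hom[OF TEH mods(4) coact_bil])
lemma coact_gen: "module_hom sE sEH rho \<Longrightarrow> coact_id sEH tEH sEHH tEHH rho (tEH e h) = tEHH (rho e) h"
  unfolding coact_id_def by (rule tlift_gen[OF TEH mods(4) coact_bil])

abbreviation "C \<equiv> coact_id sEH tEH sEHH tEHH dE"
lemma C_hom: "module_hom sEH sEHH C" by (rule coact_hom[OF dElin])
lemma C_gen: "C (tEH e h) = tEHH (dE e) h" by (rule coact_gen[OF dElin])

lemma C_mult: "C (mm u v) = mmm (C u) (C v)"
proof (rule bil_eq[OF TEH TEH bil_comp_out[OF mm_bil C_hom] bil_comp_in[OF mmm_bil C_hom C_hom]])
  fix a b a' b'
  show "C (mm (tEH a b) (tEH a' b')) = mmm (C (tEH a b)) (C (tEH a' b'))"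
    by (simp add: mm_gen C_gen mmm_gen dEmult)
qed

definition phi where "phi e = tlift sHH sEHH tHH (\<lambda>b c. tEHH (tEH e b) c)"

lemma phi_bil: "tbilinear sH sH sEHH (\<lambda>b c. tEHH (tEH e b) c)"
  by (rule tbilI) (auto intro: hom_comp tbilD[OF tEHHb] tbilD[OF tEHb])
lemma phi_hom: "module_hom sHH sEHH (phi e)" unfolding phi_def by (rule tlift_hom[OF THH mods(4) phi_bil])
lemma phi_gen: "phi e (tHH b c) = tEHH (tEH e b) c" unfolding phi_def by (rule tlift_gen[OF THH mods(4) phi_bil])

lemma phi_lin_e: "module_hom sE sEHH (\<lambda>e. phi e w)"
proof -
  interpret mp: module_pair sHH sEHH by (rule module_pairI[OF mods(5) mods(4)])
  have add: "phi (e1 + e2) w = phi e1 w + phi e2 w" for e1 e2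
    by (rule tensor_hom_eq[OF THH phi_hom mp.module_hom_add[OF phi_hom phi_hom]])
       (simp add: phi_gen module_hom.add[OF tbilD(2)[OF tEHb]] module_hom.add[OF tbilD(2)[OF tEHHb]])
  have sc: "phi (sE c e) w = sEHH c (phi e w)" for c e
    by (rule tensor_hom_eq[OF THH phi_hom mp.module_hom_scale[OF phi_hom]])
       (simp add: phi_gen module_hom.scale[OF tbilD(2)[OF tEHb]] module_hom.scale[OF tbilD(2)[OF tEHHb]])
  show ?thesis unfolding module_hom_iff using add sc mods by blast
qed

lemma phi_mult: "phi (e * e') (mH u v) = mmm (phi e u) (phi e' v)"
proof (rule bil_eq[OF THH THH bil_comp_out[OF mH_bil phi_hom] bil_comp_in[OF mmm_bil phi_hom phi_hom]])
  fix a b a' b'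
  show "phi (e * e') (mH (tHH a b) (tHH a' b')) = mmm (phi e (tHH a b)) (phi e' (tHH a' b'))"
    by (simp add: mH_gen phi_gen mmm_gen mm_gen)
qed

abbreviation "D \<equiv> id_comult sHH tHH dH sEH tEH sEHH tEHH"
lemma D_bil: "tbilinear sE sH sEHH (\<lambda>e h. phi e (dH h))"
  by (rule tbilI) (auto intro: hom_comp[OF dHlin phi_hom] phi_lin_e)
lemma D_eq: "D = tlift sEH sEHH tEH (\<lambda>e h. phi e (dH h))"
  unfolding id_comult_def phi_def ..
lemma D_hom: "module_hom sEH sEHH D" unfolding D_eq by (rule tlift_hom[OF TEH mods(4) D_bil])
lemma D_gen: "D (tEH e h) = phi e (dH h)" unfolding D_eq by (rule tlift_gen[OF TEH mods(4) D_bil])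

lemma D_mult: "D (mm u v) = mmm (D u) (D v)"
proof (rule bil_eq[OF TEH TEH bil_comp_out[OF mm_bil D_hom] bil_comp_in[OF mmm_bil D_hom D_hom]])
  fix a b a' b'
  show "D (mm (tEH a b) (tEH a' b')) = mmm (D (tEH a b)) (D (tEH a' b'))"
    by (simp add: mm_gen D_gen dHmult phi_mult)
qed

definition psi where "psi = tlift sEHH sEH tEHH (\<lambda>u h. sEH (eps h) u)"
lemma psi_bil: "tbilinear sEH sH sEH (\<lambda>u h. sEH (eps h) u)"
  by (rule tbilI) (simp_all add: eps_scale_hom mods module.module_hom_scale_self[OF mods(3)])
lemma psi_hom: "module_hom sEHH sEH psi" unfolding psi_def by (rule tlift_hom[OF TEHH mods(3) psi_bil])
lemma psi_gen: "psi (tEHH u h) = sEH (eps h) u" unfolding psi_def by (rule tlift_gen[OF TEHH mods(3) psi_bil])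

lemma psi_mult: "psi (mmm x y) = mm (psi x) (psi y)"
proof (rule bil_eq[OF TEHH TEHH bil_comp_out[OF mmm_bil psi_hom] bil_comp_in[OF mm_bil psi_hom psi_hom]])
  fix a b a' b'
  show "psi (mmm (tEHH a b) (tEHH a' b')) = mm (psi (tEHH a b)) (psi (tEHH a' b'))"
    by (simp add: mmm_gen psi_gen epsmult module_hom.scale[OF tbilD(1)[OF mm_bil]]
        module_hom.scale[OF tbilD(2)[OF mm_bil]] module.scale_scale[OF mods(3)] mult.commute)
qed

lemma psi_X1: "psi (tEHH X 1) = X"
  by (simp add: psi_gen eps1 module.scale_one[OF mods(3)])

lemma psi_C: "psi (C Z) = dE (U Z)"
  by (rule tensor_hom_eq[OF TEH hom_comp[OF C_hom psi_hom] hom_comp[OF U_hom dElin]])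
     (simp add: C_gen psi_gen U_gen module_hom.scale[OF dElin])

abbreviation "kappa \<equiv> tlift sHH sH tHH (\<lambda>a b. sH (eps b) a)"
lemma kappa_bil: "tbilinear sH sH sH (\<lambda>a b. sH (eps b) a)"
  by (rule tbilI) (simp_all add: eps_scale_hom mods module.module_hom_scale_self[OF mods(2)])
lemma kappa_hom: "module_hom sHH sH kappa" by (rule tlift_hom[OF THH mods(2) kappa_bil])
lemma kappa_gen: "kappa (tHH a b) = sH (eps b) a" by (rule tlift_gen[OF THH mods(2) kappa_bil])

lemma psi_phi: "psi (phi e w) = tEH e (kappa w)"
  by (rule tensor_hom_eq[OF THH hom_comp[OF phi_hom psi_hom] hom_comp[OF kappa_hom tbilD(1)[OF tEHb]]])
     (simp add: phi_gen psi_gen kappa_gen module_hom.scale[OF tbilD(1)[OF tEHb]])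

lemma psi_D: "psi (D Z) = Z"
proof -
  have "psi (D Z) = id Z"
    by (rule tensor_hom_eq[OF TEH hom_comp[OF D_hom psi_hom] module.module_hom_id[OF mods(3)]])
       (simp add: D_gen psi_phi counitH)
  then show ?thesis by simp
qed

lemma rho_hom: "module_hom sE sEH (\<lambda>x. mm X (dE x))"
  by (rule hom_comp[OF dElin tbilD(1)[OF mm_bil]])

lemma coact_rho: "coact_id sEH tEH sEHH tEHH (\<lambda>x. mm X (dE x)) Z = mmm (tEHH X 1) (C Z)"
  by (rule tensor_hom_eq[OF TEH coact_hom[OF rho_hom] hom_comp[OF C_hom tbilD(1)[OF mmm_bil]]])
     (simp add: coact_gen[OF rho_hom] C_gen mmm_gen)

lemma shift: "tlift sEH sEH tEH (\<lambda>e h. tEH (y * e) h) Z = mm (tEH y 1) Z"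
proof -
  have b: "tbilinear sE sH sEH (\<lambda>e h. tEH (y * e) h)"
    by (rule tbilI) (auto intro: hom_comp tbilD[OF tEHb] tbilD[OF bE])
  show ?thesis
    by (rule tensor_hom_eq[OF TEH tlift_hom[OF TEH mods(3) b] tbilD(1)[OF mm_bil]])
       (simp add: tlift_gen[OF TEH mods(3) b] mm_gen)
qed

end



context setting begin

lemma part1:
  assumes XU: "X \<in> units_EH sEH tEH"
  shows "X \<in> hopf_Z1 sHH tHH dH sEH tEH sEHH tEHH dE \<longleftrightarrow>
         hopf_module_E sHH tHH dH eps sE sEH tEH sEHH tEHH dE (twisted_coaction sEH tEH dE X)"
proof
  assume "X \<in> hopf_Z1 sHH tHH dH sEH tEH sEHH tEHH dE"
  then have coc: "mmm (tEHH X 1) (C X) = D X" unfolding hopf_Z1_def by blast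
  from XU obtain Y where Y: "mm X Y = tEH 1 1" "mm Y X = tEH 1 1" unfolding units_EH_def by blast
  have "mm X (dE (U X)) = X"
  proof -
    have "psi (mmm (tEHH X 1) (C X)) = psi (D X)" using coc by simp
    then show ?thesis by (simp add: psi_mult psi_X1 psi_C psi_D)
  qed
  then have "mm Y (mm X (dE (U X))) = mm Y X" by simp
  then have "dE (U X) = dE 1" by (simp add: mm_assoc[symmetric] Y mm_unitL dE1)
  then have UX: "U X = 1" using counitE by metis
  show "hopf_module_E sHH tHH dH eps sE sEH tEH sEHH tEHH dE (twisted_coaction sEH tEH dE X)"
    unfolding hopf_module_E_def twisted_coaction_def
  proof (intro conjI allI rho_hom)
    fix m
    have "coact_id sEH tEH sEHH tEHH (\<lambda>x. mm X (dE x)) (mm X (dE m)) = mmm (tEHH X 1) (C (mm X (dE m)))"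
      by (rule coact_rho)
    also have "\<dots> = mmm (mmm (tEHH X 1) (C X)) (C (dE m))" by (simp add: C_mult mmm_assoc)
    also have "\<dots> = mmm (D X) (D (dE m))" by (simp add: coc coassocE)
    also have "\<dots> = D (mm X (dE m))" by (simp add: D_mult)
    finally show "coact_id sEH tEH sEHH tEHH (\<lambda>x. mm X (dE x)) (mm X (dE m)) = D (mm X (dE m))" .
  next
    fix m show "U (mm X (dE m)) = m" by (simp add: U_mult UX counitE)
  next
    fix m s show "mm X (dE (m * s)) = mm (mm X (dE m)) (dE s)" by (simp add: dEmult mm_assoc)
  qed
next
  assume "hopf_module_E sHH tHH dH eps sE sEH tEH sEHH tEHH dE (twisted_coaction sEH tEH dE X)"
  then have ca: "coact_id sEH tEH sEHH tEHH (\<lambda>x. mm X (dE x)) (mm X (dE 1)) = D (mm X (dE 1))"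
    unfolding hopf_module_E_def twisted_coaction_def by blast
  have X1: "mm X (dE 1) = X" by (simp add: dE1 mm_unitR)
  from ca have "mmm (tEHH X 1) (C X) = D X" unfolding X1 coact_rho .
  then show "X \<in> hopf_Z1 sHH tHH dH sEH tEH sEHH tEHH dE" unfolding hopf_Z1_def using XU by blast
qed

lemma mm_tt: "mm (tEH a 1) (mm (tEH b 1) W) = mm (tEH (a * b) 1) W"
  by (simp add: mm_assoc[symmetric] mm_gen)
lemma mm_dd: "mm (dE a) (mm (dE b) W) = mm (dE (a * b)) W"
  by (simp add: mm_assoc[symmetric] dEmult)
lemma mm_dd2: "mm (dE a) (dE b) = dE (a * b)"
  by (simp add: dEmult)

lemma part2:
  "cohomologous sEH tEH dE Y Y' \<longleftrightarrow>
   hopf_module_E_iso sE sEH tEH (twisted_coaction sEH tEH dE Y) (twisted_coaction sEH tEH dE Y')"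
proof
  assume "cohomologous sEH tEH dE Y Y'"
  then obtain x y where xy: "x * y = 1" "y * x = 1" and Y': "Y' = mm (mm (tEH y 1) Y) (dE x)"
    unfolding cohomologous_def by blast
  have mulhom: "module_hom sE sE (\<lambda>m. a * m)" for a by (rule tbilD(1)[OF bE])
  have xym: "x * (y * m) = m" "y * (x * m) = m" for m using xy by (simp_all add: mult.assoc[symmetric])
  have f: "hopf_module_E_hom sE sEH tEH (twisted_coaction sEH tEH dE Y) (twisted_coaction sEH tEH dE Y') (\<lambda>m. y * m)"
    unfolding hopf_module_E_hom_def twisted_coaction_def
  proof (intro conjI allI mulhom)
    fix m s show "y * (m * s) = y * m * s" by (simp add: mult.assoc)
  next
    fix m
    show "mm Y' (dE (y * m)) = tlift sEH sEH tEH (\<lambda>e h. tEH (y * e) h) (mm Y (dE m))"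
      unfolding shift Y' by (simp add: mm_assoc mm_dd mm_dd2 xym)
  qed
  have g: "hopf_module_E_hom sE sEH tEH (twisted_coaction sEH tEH dE Y') (twisted_coaction sEH tEH dE Y) (\<lambda>m. x * m)"
    unfolding hopf_module_E_hom_def twisted_coaction_def
  proof (intro conjI allI mulhom)
    fix m s show "x * (m * s) = x * m * s" by (simp add: mult.assoc)
  next
    fix m
    show "mm Y (dE (x * m)) = tlift sEH sEH tEH (\<lambda>e h. tEH (x * e) h) (mm Y' (dE m))"
      unfolding shift Y' by (simp add: mm_assoc mm_dd2 mm_tt xy mm_unitL)
  qed
  show "hopf_module_E_iso sE sEH tEH (twisted_coaction sEH tEH dE Y) (twisted_coaction sEH tEH dE Y')"
    unfolding hopf_module_E_iso_def using f g xym by blast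
next
  assume "hopf_module_E_iso sE sEH tEH (twisted_coaction sEH tEH dE Y) (twisted_coaction sEH tEH dE Y')"
  then obtain f g where
    f: "hopf_module_E_hom sE sEH tEH (twisted_coaction sEH tEH dE Y) (twisted_coaction sEH tEH dE Y') f" and
    g: "hopf_module_E_hom sE sEH tEH (twisted_coaction sEH tEH dE Y') (twisted_coaction sEH tEH dE Y) g" and
    gf: "\<And>x. g (f x) = x" and fg: "\<And>y. f (g y) = y"
    unfolding hopf_module_E_iso_def by blast
  have fr: "f (m * s) = f m * s" "g (m * s) = g m * s" for m s
    using f g unfolding hopf_module_E_hom_def by blast+
  define a where "a = f 1"
  define b where "b = g 1"
  have fm: "f m = a * m" for m using fr(1)[of 1 m] by (simp add: a_def)
  have gm: "g m = b * m" for m using fr(2)[of 1 m] by (simp add: b_def)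
  have ba: "b * a = 1" using gf[of 1] by (simp add: fm gm)
  have ab: "a * b = 1" using fg[of 1] by (simp add: fm gm)
  have fe: "f = (\<lambda>m. a * m)" using fm by auto
  have col: "mm Y' (dE (f 1)) = tlift sEH sEH tEH (\<lambda>e h. tEH (f e) h) (mm Y (dE 1))"
    using f unfolding hopf_module_E_hom_def twisted_coaction_def by blast
  then have col': "mm Y' (dE a) = mm (tEH a 1) Y"
    unfolding fe shift by (simp add: dE1 mm_unitR)
  have "Y' = mm (mm (tEH a 1) Y) (dE b)"
    unfolding col'[symmetric] by (simp add: mm_assoc mm_dd2 ab dE1 mm_unitR)
  then show "cohomologous sEH tEH dE Y Y'"
    unfolding cohomologous_def using ab ba by blast
qed

end


theorem proposition1p7:
  fixes sH :: "'k::comm_ring_1 \<Rightarrow> 'h::ring_1 \<Rightarrow> 'h"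
    and sHH :: "'k \<Rightarrow> 'hh::ab_group_add \<Rightarrow> 'hh" and tHH :: "'h \<Rightarrow> 'h \<Rightarrow> 'hh"
    and sHHH :: "'k \<Rightarrow> 'hhh::ab_group_add \<Rightarrow> 'hhh" and tHHH :: "'hh \<Rightarrow> 'h \<Rightarrow> 'hhh"
    and dH :: "'h \<Rightarrow> 'hh" and eps :: "'h \<Rightarrow> 'k"
    and sE :: "'k \<Rightarrow> 'e::ring_1 \<Rightarrow> 'e"
    and sEH :: "'k \<Rightarrow> 'eh::ab_group_add \<Rightarrow> 'eh" and tEH :: "'e \<Rightarrow> 'h \<Rightarrow> 'eh"
    and sEHH :: "'k \<Rightarrow> 'ehh::ab_group_add \<Rightarrow> 'ehh" and tEHH :: "'eh \<Rightarrow> 'h \<Rightarrow> 'ehh"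
    and dE :: "'e \<Rightarrow> 'eh"
    and X :: 'eh
  assumes "hopf_algebra sH sHH tHH sHHH tHHH dH eps"
    and "comodule_algebra sH sHH tHH dH eps sE sEH tEH sEHH tEHH dE"
    and "X \<in> units_EH sEH tEH"
  shows "(X \<in> hopf_Z1 sHH tHH dH sEH tEH sEHH tEHH dE \<longleftrightarrow>
            hopf_module_E sHH tHH dH eps sE sEH tEH sEHH tEHH dE (twisted_coaction sEH tEH dE X))
       \<and> (\<forall>Y Y'. Y \<in> hopf_Z1 sHH tHH dH sEH tEH sEHH tEHH dE \<longrightarrow>
               Y' \<in> hopf_Z1 sHH tHH dH sEH tEH sEHH tEHH dE \<longrightarrow>
               (cohomologous sEH tEH dE Y Y' \<longleftrightarrow>
                hopf_module_E_iso sE sEH tEH (twisted_coaction sEH tEH dE Y)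
                                             (twisted_coaction sEH tEH dE Y')))"
proof -
  interpret setting sH sHH tHH dH eps sE sEH tEH sEHH tEHH dE
    unfolding setting_def using assms(1,2) unfolding hopf_algebra_def comodule_algebra_def by blast
  show ?thesis using part1[OF assms(3)] part2 by blast
qed

end
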